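(* Let $X$ be a Hausdorff space with $X=Y\cup T$, where $Y$ and $T$ are totally disconnected subspaces and $T$ is compact. Then $\mathcal{K}(X)$ is hereditarily disconnected if and only if the quotient space $X/T$ (obtained by collapsing $T$ to a point) is hereditarily disconnected.
   Context: $\mathcal{K}(X)$ is the set of nonempty compact subsets of $X$ with the Vietoris topology (generated by $U^+=\{A: A\subset U\}$ and $U^-=\{A: A\cap U\neq\emptyset\}$ for $U$ open in $X$). A space is hereditarily disconnected if every nonempty connected subset is a singleton; it is totally disconnected if any two distinct points can be separated by a clopen set. *)

theory Defs
  imports "HOL-Analysis.Analysis"
begin

definition hereditarily_disconnected :: "'a topology \<Rightarrow> bool" where
  "hereditarily_disconnected X \<longleftrightarrow>
     (\<forall>S. connectedin X S \<and> S \<noteq> {} \<longrightarrow> (\<exists>a. S = {a}))"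

definition totally_disconnected_space :: "'a topology \<Rightarrow> bool" where
  "totally_disconnected_space X \<longleftrightarrow>
     (\<forall>x\<in>topspace X. \<forall>y\<in>topspace X. x \<noteq> y \<longrightarrow>
        (\<exists>C. openin X C \<and> closedin X C \<and> x \<in> C \<and> y \<notin> C))"

definition compact_sets :: "'a topology \<Rightarrow> 'a set set" where
  "compact_sets X = {A. A \<noteq> {} \<and> compactin X A}"

definition vietoris :: "'a topology \<Rightarrow> 'a set topology" where
  "vietoris X = topology_generated_by
     ({{A \<in> compact_sets X. A \<subseteq> U} | U. openin X U} \<union>
      {{A \<in> compact_sets X. A \<inter> U \<noteq> {}} | U. openin X U})"

lemma topspace_vietoris: "topspace (vietoris X) = compact_sets X"
  unfolding vietoris_def topology_generated_by_topspace compact_sets_def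
  by (auto dest: compactin_subset_topspace)

text \<open>The quotient space X/T obtained by collapsing T to a point: its points are
  the classes T and {x} for x in topspace X - T; a set of classes is open iff
  its union is open in X.\<close>
definition collapse_classes :: "'a topology \<Rightarrow> 'a set \<Rightarrow> 'a set set" where
  "collapse_classes X T = (\<lambda>x. if x \<in> T then T else {x}) ` topspace X"

definition collapse_topology :: "'a topology \<Rightarrow> 'a set \<Rightarrow> 'a set topology" where
  "collapse_topology X T =
     topology (\<lambda>U. U \<subseteq> collapse_classes X T \<and> openin X (\<Union>U))"

lemma istopology_collapse:
  "istopology (\<lambda>U. U \<subseteq> collapse_classes X T \<and> openin X (\<Union>U))"
proof -
  have disj: "\<Union>(U \<inter> V) = \<Union>U \<inter> \<Union>V"
    if "U \<subseteq> collapse_classes X T" "V \<subseteq> collapse_classes X T" for U V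
  proof
    show "\<Union>U \<inter> \<Union>V \<subseteq> \<Union>(U \<inter> V)"
    proof
      fix z assume "z \<in> \<Union>U \<inter> \<Union>V"
      then obtain a b where ab: "a \<in> U" "b \<in> V" "z \<in> a" "z \<in> b" by blast
      then have "a = b" using that unfolding collapse_classes_def
        by (auto split: if_splits)
      then show "z \<in> \<Union>(U \<inter> V)" using ab by blast
    qed
  qed blast
  have un: "openin X (\<Union>(\<Union>K))" if "\<forall>U\<in>K. openin X (\<Union>U)" for K
  proof -
    have "\<Union>(\<Union>K) = \<Union>(Union ` K)" by blast
    then show ?thesis using that by (metis (no_types, lifting) imageE openin_Union)
  qed
  show ?thesis unfolding istopology_def
    using disj un by (auto simp: openin_Int)
qed

lemma openin_collapse_topology:
  "openin (collapse_topology X T) U \<longleftrightarrow>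
     U \<subseteq> collapse_classes X T \<and> openin X (\<Union>U)"
  unfolding collapse_topology_def using topology_inverse'[OF istopology_collapse[of X T]] by simp

end

theory Submission
  imports Defs
begin

lemma vietoris_open_upper:
  assumes "openin X U"
  shows "openin (vietoris X) {A \<in> compact_sets X. A \<subseteq> U}"
  unfolding vietoris_def by (rule topology_generated_by_Basis) (use assms in blast)

lemma vietoris_open_lower:
  assumes "openin X U"
  shows "openin (vietoris X) {A \<in> compact_sets X. A \<inter> U \<noteq> {}}"
  unfolding vietoris_def by (rule topology_generated_by_Basis) (use assms in blast)

lemma td_sep:
  assumes td: "totally_disconnected_space Xt" and K: "compactin Xt K"
    and s: "s \<in> topspace Xt" "s \<notin> K"
  shows "\<exists>V. openin Xt V \<and> closedin Xt V \<and> K \<subseteq> V \<and> s \<notin> V"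
proof -
  have Ksub: "K \<subseteq> topspace Xt" using K compactin_subset_topspace by blast
  have "\<forall>k\<in>K. \<exists>C. openin Xt C \<and> closedin Xt C \<and> k \<in> C \<and> s \<notin> C"
  proof
    fix k assume "k \<in> K"
    then have "k \<noteq> s" "k \<in> topspace Xt" using s Ksub by auto
    then show "\<exists>C. openin Xt C \<and> closedin Xt C \<and> k \<in> C \<and> s \<notin> C"
      using td s unfolding totally_disconnected_space_def by blast
  qed
  then obtain c where c: "\<And>k. k \<in> K \<Longrightarrow> openin Xt (c k) \<and> closedin Xt (c k) \<and> k \<in> c k \<and> s \<notin> c k"
    by metis
  have "(\<forall>x\<in>c ` K. openin Xt x) \<and> K \<subseteq> \<Union>(c ` K)" using c by blast
  then obtain F where F: "finite F" "F \<subseteq> c ` K" "K \<subseteq> \<Union>F"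
    using K unfolding compactin_def by meson
  show ?thesis
  proof (intro exI conjI)
    show "openin Xt (\<Union>F)" using F c by (intro openin_Union) blast
    show "closedin Xt (\<Union>F)" using F c by (intro closedin_Union) blast+
    show "K \<subseteq> \<Union>F" by (rule F(3))
    show "s \<notin> \<Union>F" using F c by blast
  qed
qed

lemma td_subtopology:
  assumes "totally_disconnected_space Xt"
  shows "totally_disconnected_space (subtopology Xt S)"
  unfolding totally_disconnected_space_def
proof (intro ballI impI)
  fix x y assume xy: "x \<in> topspace (subtopology Xt S)" "y \<in> topspace (subtopology Xt S)" "x \<noteq> y"
  then obtain C where C: "openin Xt C" "closedin Xt C" "x \<in> C" "y \<notin> C"
    using assms unfolding totally_disconnected_space_def by auto
  show "\<exists>C. openin (subtopology Xt S) C \<and> closedin (subtopology Xt S) C \<and> x \<in> C \<and> y \<notin> C"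
    using C xy by (intro exI[of _ "C \<inter> S"]) (auto simp: openin_subtopology_Int closedin_subtopology)
qed

lemma conn_sep:
  assumes conn: "connectedin (vietoris X) \<C>" and B: "B \<in> \<C>"
    and G: "openin X G1" "openin X G2" "\<Union>\<C> \<subseteq> G1 \<union> G2" "G1 \<inter> G2 \<inter> \<Union>\<C> = {}"
    and BG: "B \<inter> G1 = {}"
  shows "\<Union>\<C> \<inter> G1 = {}"
proof (rule ccontr)
  assume ne: "\<Union>\<C> \<inter> G1 \<noteq> {}"
  define E1 where "E1 = {A \<in> compact_sets X. A \<inter> G1 \<noteq> {}}"
  define E2 where "E2 = {A \<in> compact_sets X. A \<subseteq> G2}"
  have sub: "\<C> \<subseteq> compact_sets X"
    using connectedin_subset_topspace[OF conn] topspace_vietoris by metis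
  have "openin (vietoris X) E1" unfolding E1_def by (rule vietoris_open_lower[OF G(1)])
  moreover have "openin (vietoris X) E2" unfolding E2_def by (rule vietoris_open_upper[OF G(2)])
  moreover have "\<C> \<subseteq> E1 \<union> E2"
    using sub G(3) unfolding E1_def E2_def by blast
  moreover have "E1 \<inter> E2 \<inter> \<C> = {}"
    using G(4) unfolding E1_def E2_def by blast
  moreover have "E1 \<inter> \<C> \<noteq> {}" using ne sub unfolding E1_def by blast
  moreover have "E2 \<inter> \<C> \<noteq> {}" using B BG sub G(3) unfolding E2_def by blast
  ultimately show False using conn unfolding connectedin by blast
qed

lemma classes_cases:
  assumes "c \<in> collapse_classes X T"
  obtains x where "x \<in> topspace X" "x \<in> T" "c = T" | x where "x \<in> topspace X" "x \<notin> T" "c = {x}"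
  using assms unfolding collapse_classes_def by (auto split: if_splits)

lemma class_T: "x \<in> topspace X \<Longrightarrow> x \<in> T \<Longrightarrow> T \<in> collapse_classes X T"
  unfolding collapse_classes_def by force

lemma class_single: "x \<in> topspace X \<Longrightarrow> x \<notin> T \<Longrightarrow> {x} \<in> collapse_classes X T"
  unfolding collapse_classes_def by force

lemma Union_classes:
  assumes "T \<subseteq> topspace X"
  shows "\<Union>(collapse_classes X T) = topspace X"
proof
  show "\<Union>(collapse_classes X T) \<subseteq> topspace X"
    using assms unfolding collapse_classes_def by auto
  show "topspace X \<subseteq> \<Union>(collapse_classes X T)"
  proof
    fix x assume x: "x \<in> topspace X"
    show "x \<in> \<Union>(collapse_classes X T)"
    proof (cases "x \<in> T")
      case True then show ?thesis using class_T[OF x] by blast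
    next
      case False then show ?thesis using class_single[OF x] by blast
    qed
  qed
qed

lemma topspace_collapse:
  assumes "T \<subseteq> topspace X"
  shows "topspace (collapse_topology X T) = collapse_classes X T"
proof
  show "topspace (collapse_topology X T) \<subseteq> collapse_classes X T"
    unfolding topspace_def using openin_collapse_topology by blast
  have "openin (collapse_topology X T) (collapse_classes X T)"
    unfolding openin_collapse_topology using Union_classes[OF assms] by simp
  then show "collapse_classes X T \<subseteq> topspace (collapse_topology X T)"
    by (rule openin_subset)
qed

lemma forward_dir:
  assumes cT: "compactin X T" and hdV: "hereditarily_disconnected (vietoris X)"
  shows "hereditarily_disconnected (collapse_topology X T)"
  unfolding hereditarily_disconnected_def
proof (intro allI impI)
  fix \<Sigma> assume a: "connectedin (collapse_topology X T) \<Sigma> \<and> \<Sigma> \<noteq> {}"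
  have Tsub: "T \<subseteq> topspace X" using cT compactin_subset_topspace by blast
  have ts: "topspace (collapse_topology X T) = collapse_classes X T"
    by (rule topspace_collapse[OF Tsub])
  define \<phi> where "\<phi> = (\<lambda>c. T \<union> c)"
  have cs: "\<phi> c \<in> compact_sets X" if "c \<in> collapse_classes X T" for c
    using that
  proof (cases rule: classes_cases)
    case (1 x) then show ?thesis using cT unfolding \<phi>_def compact_sets_def by auto
  next
    case (2 x)
    have "compactin X (T \<union> {x})" using cT 2 by (intro compactin_Un) auto
    then show ?thesis using 2 unfolding \<phi>_def compact_sets_def by auto
  qed
  have cont: "continuous_map (collapse_topology X T) (vietoris X) \<phi>"
    unfolding vietoris_def
  proof (rule continuous_on_generated_topo)
    fix U assume "U \<in> {{A \<in> compact_sets X. A \<subseteq> W} |W. openin X W} \<union>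
        {{A \<in> compact_sets X. A \<inter> W \<noteq> {}} |W. openin X W}"
    then consider W where "openin X W" "U = {A \<in> compact_sets X. A \<subseteq> W}"
      | W where "openin X W" "U = {A \<in> compact_sets X. A \<inter> W \<noteq> {}}" by blast
    then show "openin (collapse_topology X T) (\<phi> -` U \<inter> topspace (collapse_topology X T))"
    proof cases
      case 1
      have Wsub: "W \<subseteq> topspace X" using 1 openin_subset by blast
      show ?thesis
      proof (cases "T \<subseteq> W")
        case True
        have eq: "\<Union>(\<phi> -` U \<inter> collapse_classes X T) = W"
        proof
          show "\<Union>(\<phi> -` U \<inter> collapse_classes X T) \<subseteq> W" using 1 unfolding \<phi>_def by auto
          show "W \<subseteq> \<Union>(\<phi> -` U \<inter> collapse_classes X T)"
          proof
            fix w assume w: "w \<in> W"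
            then have wt: "w \<in> topspace X" using Wsub by blast
            show "w \<in> \<Union>(\<phi> -` U \<inter> collapse_classes X T)"
            proof (cases "w \<in> T")
              case True
              then show ?thesis using class_T[OF wt True] cs[OF class_T[OF wt True]] 1 \<open>T \<subseteq> W\<close>
                unfolding \<phi>_def by blast
            next
              case False
              then show ?thesis using class_single[OF wt False] cs[OF class_single[OF wt False]] 1 \<open>T \<subseteq> W\<close> w
                unfolding \<phi>_def by blast
            qed
          qed
        qed
        show ?thesis unfolding ts openin_collapse_topology eq using 1 by blast
      next
        case False
        then have "\<phi> -` U \<inter> collapse_classes X T = {}" using 1 unfolding \<phi>_def by auto
        then show ?thesis unfolding ts by simp
      qed
    next
      case 2
      have Wsub: "W \<subseteq> topspace X" using 2 openin_subset by blast
      show ?thesis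
      proof (cases "T \<inter> W = {}")
        case False
        have "collapse_classes X T \<subseteq> \<phi> -` U"
        proof
          fix c assume c: "c \<in> collapse_classes X T"
          have "\<phi> c \<inter> W \<noteq> {}" using False unfolding \<phi>_def by blast
          then show "c \<in> \<phi> -` U" using cs[OF c] \<open>U = _\<close> by simp
        qed
        then have "\<phi> -` U \<inter> collapse_classes X T = collapse_classes X T" by blast
        then show ?thesis unfolding ts by (metis openin_topspace ts)
      next
        case True
        have eq: "\<Union>(\<phi> -` U \<inter> collapse_classes X T) = W"
        proof
          show "\<Union>(\<phi> -` U \<inter> collapse_classes X T) \<subseteq> W"
          proof
            fix y assume "y \<in> \<Union>(\<phi> -` U \<inter> collapse_classes X T)"
            then obtain c where c: "c \<in> collapse_classes X T" "\<phi> c \<in> U" "y \<in> c" by blast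
            from c(1) show "y \<in> W"
            proof (cases rule: classes_cases)
              case (1 x) then show ?thesis using c 2 True unfolding \<phi>_def by auto
            next
              case (2 x) then show ?thesis using c \<open>U = _\<close> True unfolding \<phi>_def by auto
            qed
          qed
          show "W \<subseteq> \<Union>(\<phi> -` U \<inter> collapse_classes X T)"
          proof
            fix w assume w: "w \<in> W"
            then have wt: "w \<in> topspace X" "w \<notin> T" using Wsub True by blast+
            then show "w \<in> \<Union>(\<phi> -` U \<inter> collapse_classes X T)"
              using class_single[OF wt] cs[OF class_single[OF wt]] 2 w
              unfolding \<phi>_def by blast
          qed
        qed
        show ?thesis unfolding ts openin_collapse_topology eq using 2 by blast
      qed
    qed
  next
    have "compact_sets X \<subseteq> \<Union>({{A \<in> compact_sets X. A \<subseteq> W} |W. openin X W} \<union>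
        {{A \<in> compact_sets X. A \<inter> W \<noteq> {}} |W. openin X W})"
    proof
      fix A assume A: "A \<in> compact_sets X"
      then have "A \<subseteq> topspace X" unfolding compact_sets_def using compactin_subset_topspace by blast
      then have "A \<in> {A \<in> compact_sets X. A \<subseteq> topspace X}" using A by simp
      moreover have "{A \<in> compact_sets X. A \<subseteq> topspace X} \<in> {{A \<in> compact_sets X. A \<subseteq> W} |W. openin X W}"
        by (intro CollectI exI[of _ "topspace X"]) simp
      ultimately show "A \<in> \<Union>({{A \<in> compact_sets X. A \<subseteq> W} |W. openin X W} \<union>
        {{A \<in> compact_sets X. A \<inter> W \<noteq> {}} |W. openin X W})"
        by (intro UnionI[of "{A \<in> compact_sets X. A \<subseteq> topspace X}"] UnI1)
    qed
    then show "\<phi> ` topspace (collapse_topology X T) \<subseteq> \<Union>({{A \<in> compact_sets X. A \<subseteq> W} |W. openin X W} \<union>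
        {{A \<in> compact_sets X. A \<inter> W \<noteq> {}} |W. openin X W})"
    proof -
      have "\<phi> ` topspace (collapse_topology X T) \<subseteq> compact_sets X" using cs unfolding ts by (intro image_subsetI)
      then show ?thesis using \<open>compact_sets X \<subseteq> _\<close> by (rule subset_trans)
    qed
  qed
  have inj: "c = c'" if "c \<in> collapse_classes X T" "c' \<in> collapse_classes X T" "\<phi> c = \<phi> c'" for c c'
    using that(1)
  proof (cases rule: classes_cases)
    case (1 x)
    from that(2) show ?thesis
    proof (cases rule: classes_cases)
      case (1 y) then show ?thesis using \<open>c = T\<close> by simp
    next
      case (2 y)
      have "y \<in> \<phi> c'" unfolding \<phi>_def using \<open>c' = {y}\<close> by simp
      then have "y \<in> \<phi> c" using that(3) by simp
      then have "y \<in> T" unfolding \<phi>_def using \<open>c = T\<close> by simp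
      then show ?thesis using \<open>y \<notin> T\<close> by contradiction
    qed
  next
    case (2 x)
    from that(2) show ?thesis
    proof (cases rule: classes_cases)
      case (1 y)
      have "x \<in> \<phi> c" unfolding \<phi>_def using \<open>c = {x}\<close> by simp
      then have "x \<in> \<phi> c'" using that(3) by simp
      then have "x \<in> T" unfolding \<phi>_def using \<open>c' = T\<close> by simp
      then show ?thesis using \<open>x \<notin> T\<close> by contradiction
    next
      case (2 y)
      have "x \<in> \<phi> c" unfolding \<phi>_def using \<open>c = {x}\<close> by simp
      then have "x \<in> \<phi> c'" using that(3) by simp
      then have "x = y" unfolding \<phi>_def using \<open>c' = {y}\<close> \<open>x \<notin> T\<close> by simp
      then show ?thesis using \<open>c = {x}\<close> \<open>c' = {y}\<close> by simp
    qed
  qed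
  have "\<Sigma> \<subseteq> topspace (collapse_topology X T)" using a connectedin_subset_topspace by blast
  then have Ssub: "\<Sigma> \<subseteq> collapse_classes X T" unfolding ts .
  have "connectedin (vietoris X) (\<phi> ` \<Sigma>)" using connectedin_continuous_map_image[OF cont] a by blast
  moreover have "\<phi> ` \<Sigma> \<noteq> {}" using a by blast
  ultimately have "\<exists>K. \<phi> ` \<Sigma> = {K}" using hdV unfolding hereditarily_disconnected_def by simp
  then obtain K where K: "\<phi> ` \<Sigma> = {K}" by blast
  obtain c where c: "c \<in> \<Sigma>" using a by blast
  have "\<Sigma> = {c}"
  proof
    show "\<Sigma> \<subseteq> {c}"
    proof
      fix c' assume "c' \<in> \<Sigma>"
      then have "\<phi> c' = \<phi> c" using K c by blast
      then show "c' \<in> {c}" using inj Ssub c \<open>c' \<in> \<Sigma>\<close> by blast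
    qed
  qed (use c in blast)
  then show "\<exists>a. \<Sigma> = {a}" by blast
qed

lemma case1:
  assumes H: "Hausdorff_space X"
    and tdW: "totally_disconnected_space (subtopology X (topspace X - T))"
    and cT: "compactin X T"
    and hd: "hereditarily_disconnected (collapse_topology X T)"
    and conn: "connectedin (vietoris X) \<C>"
    and A: "A \<in> \<C>" and B: "B \<in> \<C>" and x: "x \<in> A" "x \<notin> B" "x \<notin> T"
  shows False
proof -
  have Tsub: "T \<subseteq> topspace X" using cT compactin_subset_topspace by blast
  have sub: "\<C> \<subseteq> compact_sets X"
    using connectedin_subset_topspace[OF conn] topspace_vietoris by metis
  have Kc: "compactin X K" if "K \<in> \<C>" for K using sub that unfolding compact_sets_def by blast
  define U where "U = \<Union>\<C>"
  have Usub: "U \<subseteq> topspace X" unfolding U_def using Kc compactin_subset_topspace by blast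
  define S where "S = U - B - T"
  have xS: "x \<in> S" unfolding S_def U_def using A x by blast
  have BU: "B \<subseteq> U" unfolding U_def using B by blast
  have cB: "compactin X B" using Kc B by blast
  have clB: "closedin X B" using compactin_imp_closedin[OF H cB] .
  have clT: "closedin X T" using compactin_imp_closedin[OF H cT] .
  obtain O1 O2 s where O: "openin X O1" "openin X O2" "S \<subseteq> O1 \<union> O2" "O1 \<inter> O2 \<inter> S = {}"
      "T \<subseteq> O1" "s \<in> S" "s \<in> O2"
  proof (cases "T = {}")
    case True
    show ?thesis
      by (rule that[of "{}" "topspace X" x]) (use True xS Usub S_def in auto)
  next
    case False
    then obtain t where t: "t \<in> T" by blast
    have ts: "topspace (collapse_topology X T) = collapse_classes X T"
      by (rule topspace_collapse[OF Tsub])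
    define \<Sigma> where "\<Sigma> = insert T ((\<lambda>y. {y}) ` S)"
    have TS: "T \<in> collapse_classes X T" using class_T[of t X T] t Tsub by blast
    have SS: "{y} \<in> collapse_classes X T" if "y \<in> S" for y
      using class_single[of y X T] that Usub unfolding S_def by blast
    have Ssub: "\<Sigma> \<subseteq> topspace (collapse_topology X T)"
      unfolding ts \<Sigma>_def using TS SS by blast
    have ne: "T \<noteq> {x}" using x by blast
    have "\<not> connectedin (collapse_topology X T) \<Sigma>"
    proof
      assume "connectedin (collapse_topology X T) \<Sigma>"
      moreover have "\<Sigma> \<noteq> {}" unfolding \<Sigma>_def by blast
      ultimately have "\<exists>a. \<Sigma> = {a}" using hd unfolding hereditarily_disconnected_def by simp
      then obtain a where a: "\<Sigma> = {a}" by blast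
      have "T \<in> \<Sigma>" "{x} \<in> \<Sigma>" unfolding \<Sigma>_def using xS by blast+
      then show False using a ne by blast
    qed
    then obtain E1 E2 where E: "openin (collapse_topology X T) E1" "openin (collapse_topology X T) E2"
        "\<Sigma> \<subseteq> E1 \<union> E2" "E1 \<inter> E2 \<inter> \<Sigma> = {}" "E1 \<inter> \<Sigma> \<noteq> {}" "E2 \<inter> \<Sigma> \<noteq> {}"
      using Ssub unfolding connectedin by blast
    have key: "\<exists>O1 O2 s. openin X O1 \<and> openin X O2 \<and> S \<subseteq> O1 \<union> O2 \<and> O1 \<inter> O2 \<inter> S = {} \<and>
        T \<subseteq> O1 \<and> s \<in> S \<and> s \<in> O2"
      if F: "openin (collapse_topology X T) F1" "openin (collapse_topology X T) F2"
        "\<Sigma> \<subseteq> F1 \<union> F2" "F1 \<inter> F2 \<inter> \<Sigma> = {}" "F2 \<inter> \<Sigma> \<noteq> {}" "T \<in> F1" for F1 F2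
    proof -
      have F1c: "F1 \<subseteq> collapse_classes X T" "openin X (\<Union>F1)"
        using F(1) unfolding openin_collapse_topology by blast+
      have F2c: "F2 \<subseteq> collapse_classes X T" "openin X (\<Union>F2)"
        using F(2) unfolding openin_collapse_topology by blast+
      have cls: "c = {y}" if "c \<in> collapse_classes X T" "y \<in> c" "y \<notin> T" for c y
        using that(1)
      proof (cases rule: classes_cases)
        case (1 z) then show ?thesis using that by blast
      next
        case (2 z) then show ?thesis using that by blast
      qed
      have inS: "{y} \<in> \<Sigma>" if "y \<in> S" for y unfolding \<Sigma>_def using that by blast
      have yT: "y \<notin> T" if "y \<in> S" for y using that unfolding S_def by blast
      have mem1: "{y} \<in> F1" if "y \<in> S" "y \<in> \<Union>F1" for y
        using that cls F1c(1) yT by blast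
      have mem2: "{y} \<in> F2" if "y \<in> S" "y \<in> \<Union>F2" for y
        using that cls F2c(1) yT by blast
      obtain e where e: "e \<in> F2" "e \<in> \<Sigma>" using F(5) by blast
      have "e \<noteq> T" using e F(4) F(6) by blast
      then obtain y where y: "y \<in> S" "e = {y}" using e(2) unfolding \<Sigma>_def by blast
      show ?thesis
      proof (intro exI conjI)
        show "openin X (\<Union>F1)" "openin X (\<Union>F2)" by (fact F1c(2), fact F2c(2))
        show "S \<subseteq> \<Union>F1 \<union> \<Union>F2"
        proof
          fix z assume "z \<in> S"
          then have "{z} \<in> F1 \<union> F2" using inS F(3) by blast
          then show "z \<in> \<Union>F1 \<union> \<Union>F2" by blast
        qed
        show "\<Union>F1 \<inter> \<Union>F2 \<inter> S = {}"
        proof (rule ccontr)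
          assume "\<Union>F1 \<inter> \<Union>F2 \<inter> S \<noteq> {}"
          then obtain z where z: "z \<in> S" "z \<in> \<Union>F1" "z \<in> \<Union>F2" by blast
          then have "{z} \<in> F1 \<inter> F2 \<inter> \<Sigma>" using mem1 mem2 inS by blast
          then show False using F(4) by blast
        qed
        show "T \<subseteq> \<Union>F1" using F(6) by blast
        show "y \<in> S" by (fact y(1))
        show "y \<in> \<Union>F2" using e(1) y(2) by blast
      qed
    qed
    have "T \<in> E1 \<or> T \<in> E2" using E(3) unfolding \<Sigma>_def by blast
    then have "\<exists>O1 O2 s. openin X O1 \<and> openin X O2 \<and> S \<subseteq> O1 \<union> O2 \<and> O1 \<inter> O2 \<inter> S = {} \<and>
        T \<subseteq> O1 \<and> s \<in> S \<and> s \<in> O2"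
    proof
      assume "T \<in> E1"
      then show ?thesis using key[of E1 E2] E by blast
    next
      assume "T \<in> E2"
      moreover have "E2 \<inter> E1 \<inter> \<Sigma> = {}" using E(4) by blast
      moreover have "\<Sigma> \<subseteq> E2 \<union> E1" using E(3) by blast
      ultimately show ?thesis using key[of E2 E1] E by blast
    qed
    then show ?thesis using that by blast
  qed
  define J where "J = B - O1"
  have cJ: "compactin X J"
  proof -
    have "closedin X (topspace X - O1)" using O(1) by blast
    then have "compactin X ((topspace X - O1) \<inter> B)" using cB by (rule closed_Int_compactin)
    moreover have "(topspace X - O1) \<inter> B = J"
      unfolding J_def using cB compactin_subset_topspace by blast
    ultimately show ?thesis by simp
  qed
  have JW: "J \<subseteq> topspace X - T" unfolding J_def using O(5) cB compactin_subset_topspace by blast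
  define W where "W = subtopology X (topspace X - T)"
  have tW: "topspace W = topspace X - T" unfolding W_def by auto
  have cJW: "compactin W J" unfolding W_def compactin_subtopology using cJ JW by blast
  have sW: "s \<in> topspace W" "s \<notin> J"
    using O(6) Usub unfolding tW S_def J_def by blast+
  obtain V where V: "openin W V" "closedin W V" "J \<subseteq> V" "s \<notin> V"
    using td_sep[OF tdW[folded W_def] cJW sW] by blast
  have oW: "openin X (topspace X - T)" using clT by blast
  have oV: "openin X V" using openin_trans_full[OF V(1)[unfolded W_def] oW] .
  have "openin W (topspace W - V)" using V(2) by blast
  then have "openin W (topspace X - T - V)" using tW by simp
  then have "openin (subtopology X (topspace X - T)) (topspace X - T - V)" unfolding W_def .
  then have oR: "openin X (topspace X - T - V)" using openin_trans_full oW by blast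
  define G1 where "G1 = O2 \<inter> (topspace X - T - V) - B"
  define G2 where "G2 = O1 \<union> V"
  have oG1: "openin X G1" unfolding G1_def using O(2) oR clB by blast
  have oG2: "openin X G2" unfolding G2_def using O(1) oV by blast
  have cov: "\<Union>\<C> \<subseteq> G1 \<union> G2"
  proof
    fix u assume u: "u \<in> \<Union>\<C>"
    then have uU: "u \<in> U" "u \<in> topspace X" unfolding U_def using Usub U_def by blast+
    show "u \<in> G1 \<union> G2"
    proof (cases "u \<in> T \<or> u \<in> B")
      case True
      then show ?thesis unfolding G2_def using O(5) V(3) unfolding J_def by blast
    next
      case False
      then have "u \<in> S" unfolding S_def using uU by blast
      then have "u \<in> O1 \<or> u \<in> O2" using O(3) by blast
      then show ?thesis unfolding G1_def G2_def using False uU by blast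
    qed
  qed
  have dis: "G1 \<inter> G2 \<inter> \<Union>\<C> = {}"
  proof (rule ccontr)
    assume "G1 \<inter> G2 \<inter> \<Union>\<C> \<noteq> {}"
    then obtain u where u: "u \<in> G1" "u \<in> G2" "u \<in> U" unfolding U_def by blast
    then have "u \<in> S" "u \<in> O2" "u \<notin> V" unfolding S_def G1_def by blast+
    moreover have "u \<in> O1" using u(2) \<open>u \<notin> V\<close> unfolding G2_def by blast
    ultimately show False using O(4) by blast
  qed
  have BG: "B \<inter> G1 = {}" unfolding G1_def by blast
  have "\<Union>\<C> \<inter> G1 = {}" by (rule conn_sep[OF conn B oG1 oG2 cov dis BG])
  moreover have "s \<in> G1" unfolding G1_def using O(6,7) V(4) Usub unfolding S_def by blast
  moreover have "s \<in> \<Union>\<C>" using O(6) unfolding S_def U_def by blast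
  ultimately show False by blast
qed

lemma case2:
  assumes H: "Hausdorff_space X"
    and tdT: "totally_disconnected_space (subtopology X T)"
    and cT: "compactin X T"
    and conn: "connectedin (vietoris X) \<C>"
    and A: "A \<in> \<C>" and B: "B \<in> \<C>" and x: "x \<in> A" "x \<notin> B" "x \<in> T"
    and all: "\<And>K. K \<in> \<C> \<Longrightarrow> K - T \<subseteq> B"
  shows False
proof -
  have Tsub: "T \<subseteq> topspace X" using cT compactin_subset_topspace by blast
  have sub: "\<C> \<subseteq> compact_sets X"
    using connectedin_subset_topspace[OF conn] topspace_vietoris by metis
  have Kc: "compactin X K" if "K \<in> \<C>" for K using sub that unfolding compact_sets_def by blast
  have Usub: "\<Union>\<C> \<subseteq> topspace X" using Kc compactin_subset_topspace by blast
  have cB: "compactin X B" using Kc B by blast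
  have clB: "closedin X B" using compactin_imp_closedin[OF H cB] .
  have clT: "closedin X T" using compactin_imp_closedin[OF H cT] .
  have cBT: "compactin X (B \<inter> T)" using clB cT by (rule closed_Int_compactin)
  have tT: "topspace (subtopology X T) = T" using Tsub by auto
  have cBTs: "compactin (subtopology X T) (B \<inter> T)" unfolding compactin_subtopology using cBT by blast
  have xs: "x \<in> topspace (subtopology X T)" "x \<notin> B \<inter> T" using x tT by auto
  obtain V where V: "openin (subtopology X T) V" "closedin (subtopology X T) V" "B \<inter> T \<subseteq> V" "x \<notin> V"
    using td_sep[OF tdT cBTs xs] by blast
  have VT: "V \<subseteq> T" using openin_subset[OF V(1)] tT by blast
  define D where "D = T - V"
  have "closedin (subtopology X T) (topspace (subtopology X T) - V)" using V(1) by blast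
  then have "closedin (subtopology X T) D" unfolding D_def tT .
  then have clD: "closedin X D" using closedin_trans_full clT by blast
  have cD: "compactin X D"
  proof -
    have "compactin X (D \<inter> T)" using clD cT by (rule closed_Int_compactin)
    moreover have "D \<inter> T = D" unfolding D_def by blast
    ultimately show ?thesis by simp
  qed
  have clV: "closedin X V" using closedin_trans_full[OF V(2) clT] .
  have cV: "compactin X V"
  proof -
    have "compactin X (V \<inter> T)" using clV cT by (rule closed_Int_compactin)
    moreover have "V \<inter> T = V" using VT by blast
    ultimately show ?thesis by simp
  qed
  have "disjnt D V" unfolding D_def disjnt_def by blast
  then obtain G G' where G: "openin X G" "openin X G'" "D \<subseteq> G" "V \<subseteq> G'" "disjnt G G'"
    using Hausdorff_space_compact_separation[OF H cD cV] by metis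
  define G1 where "G1 = G - B"
  define G2 where "G2 = topspace X - D"
  have oG1: "openin X G1" unfolding G1_def using G(1) clB by blast
  have oG2: "openin X G2" unfolding G2_def using clD by blast
  have DB: "D \<inter> B = {}" unfolding D_def using V(3) by blast
  have cov: "\<Union>\<C> \<subseteq> G1 \<union> G2"
  proof
    fix u assume u: "u \<in> \<Union>\<C>"
    show "u \<in> G1 \<union> G2"
    proof (cases "u \<in> D")
      case True then show ?thesis unfolding G1_def using G(3) DB by blast
    next
      case False then show ?thesis unfolding G2_def using u Usub by blast
    qed
  qed
  have dis: "G1 \<inter> G2 \<inter> \<Union>\<C> = {}"
  proof (rule ccontr)
    assume "G1 \<inter> G2 \<inter> \<Union>\<C> \<noteq> {}"
    then obtain u K where u: "u \<in> G" "u \<notin> B" "u \<notin> D" "u \<in> K" "K \<in> \<C>"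
      unfolding G1_def G2_def by blast
    then have "u \<in> T" using all by blast
    then have "u \<in> V" using u(3) unfolding D_def by blast
    then have "u \<in> G'" using G(4) by blast
    then show False using u(1) G(5) unfolding disjnt_def by blast
  qed
  have BG: "B \<inter> G1 = {}" unfolding G1_def by blast
  have "\<Union>\<C> \<inter> G1 = {}" by (rule conn_sep[OF conn B oG1 oG2 cov dis BG])
  moreover have "x \<in> G1" unfolding G1_def using x V(4) G(3) unfolding D_def by blast
  moreover have "x \<in> \<Union>\<C>" using x A by blast
  ultimately show False by blast
qed

lemma backward_dir:
  assumes H: "Hausdorff_space X"
    and tdW: "totally_disconnected_space (subtopology X (topspace X - T))"
    and tdT: "totally_disconnected_space (subtopology X T)"
    and cT: "compactin X T"
    and hd: "hereditarily_disconnected (collapse_topology X T)"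
  shows "hereditarily_disconnected (vietoris X)"
  unfolding hereditarily_disconnected_def
proof (intro allI impI)
  fix \<C> assume a: "connectedin (vietoris X) \<C> \<and> \<C> \<noteq> {}"
  then have conn: "connectedin (vietoris X) \<C>" by blast
  have nd: "K - T \<subseteq> L" if "K \<in> \<C>" "L \<in> \<C>" for K L
  proof
    fix y assume "y \<in> K - T"
    show "y \<in> L"
    proof (rule ccontr)
      assume "y \<notin> L"
      then show False using case1[OF H tdW cT hd conn that(1) that(2)] \<open>y \<in> K - T\<close> by blast
    qed
  qed
  have le: "K \<subseteq> L" if "K \<in> \<C>" "L \<in> \<C>" for K L
  proof
    fix y assume y: "y \<in> K"
    show "y \<in> L"
    proof (rule ccontr)
      assume yL: "y \<notin> L"
      show False
      proof (cases "y \<in> T")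
        case True
        show False by (rule case2[OF H tdT cT conn that(1) that(2) y yL True]) (use nd that(2) in blast)
      next
        case False
        show False by (rule case1[OF H tdW cT hd conn that(1) that(2) y yL False])
      qed
    qed
  qed
  obtain K where K: "K \<in> \<C>" using a by blast
  have "\<C> = {K}"
  proof
    show "\<C> \<subseteq> {K}" using le K by blast
  qed (use K in blast)
  then show "\<exists>a. \<C> = {a}" by blast
qed

theorem corollary5p6:
  fixes X :: "'a topology" and Y T :: "'a set"
  assumes "Hausdorff_space X"
    and "topspace X = Y \<union> T"
    and "totally_disconnected_space (subtopology X Y)"
    and "totally_disconnected_space (subtopology X T)"
    and "compactin X T"
  shows "hereditarily_disconnected (vietoris X) \<longleftrightarrow>
         hereditarily_disconnected (collapse_topology X T)"
proof
  assume "hereditarily_disconnected (vietoris X)"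
  then show "hereditarily_disconnected (collapse_topology X T)"
    using forward_dir[OF assms(5)] by blast
next
  assume hd: "hereditarily_disconnected (collapse_topology X T)"
  have "subtopology (subtopology X Y) (topspace X - T) = subtopology X (Y \<inter> (topspace X - T))"
    by (rule subtopology_subtopology)
  moreover have "Y \<inter> (topspace X - T) = topspace X - T" using assms(2) by blast
  ultimately have "subtopology X (topspace X - T) = subtopology (subtopology X Y) (topspace X - T)"
    by simp
  then have tdW: "totally_disconnected_space (subtopology X (topspace X - T))"
    using td_subtopology[OF assms(3)] by simp
  show "hereditarily_disconnected (vietoris X)"
    by (rule backward_dir[OF assms(1) tdW assms(4) assms(5) hd])
qed

end
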